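(* Let $r\ge0$, let $\mathbf u=(u_1,\dots,u_r)$ be a tuple of positive integers, and let $\mathbf w=(w_1,\dots,w_n)$ and $\boldsymbol\ell=(\ell_1,\dots,\ell_n)$ be tuples of positive integers with $2\le\ell_i\le w_i$ for all $i$. Define an equivalence relation $\sim$ on $\{1,\dots,n\}$ by $i\sim j$ if and only if $w_i=w_j$ and $\ell_i=\ell_j$, and let $R$ be a set of equivalence class representatives. Then \[ C(\mathrm{cat}(\mathbf u,\mathbf w),\mathrm{cat}(1^r,\boldsymbol\ell),2)=C(\mathrm{cat}(\mathbf u,\mathbf w^R),\mathrm{cat}(1^r,\boldsymbol\ell^R),2). \]
   Context: $1^r$ denotes the $r$-tuple with all entries $1$; $\mathrm{cat}(\mathbf a,\mathbf b)$ is the concatenation of tuples; for $R\subseteq\{1,\dots,n\}$, $\mathbf w^R$ denotes the tuple of entries of $\mathbf w$ in positions from $R$ (in increasing order). For tuples $\mathbf v,\mathbf k$ of positive integers of the same length $p$ with $\mathbf k\le\mathbf v$ entrywise: let $X_1,\dots,X_p$ be pairwise disjoint sets with $|X_i|=v_i$; a block is a $p$-tuple $(B_1,\dots,B_p)$ with $B_i\subseteq X_i$, $|B_i|=k_i$; a $p$-tuple of sets $(T_1,\dots,T_p)$ is $(\mathbf v,\mathbf k,2)$-admissible if $T_i\subseteq X_i$, $|T_i|\le k_i$ and $\sum|T_i|=2$, and is contained in a block if $T_i\subseteq B_i$ for all $i$. A ${\rm GC}(\mathbf v,\mathbf k,2)$ is a finite family (repetitions allowed) of blocks containing every admissible tuple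 in at least one block; $C(\mathbf v,\mathbf k,2)$ is the minimum number of blocks of such a design. *)

theory Defs
  imports Main
begin

text \<open>Tuples are lists (0-based positions). The point set X_i is realised
canonically as {..< v!i} in coordinate i (the coordinates are kept apart by
being separate list entries, which models pairwise disjointness).\<close>

definition is_block :: "nat list \<Rightarrow> nat list \<Rightarrow> nat set list \<Rightarrow> bool" where
  "is_block v k B \<longleftrightarrow> length B = length v \<and>
     (\<forall>i<length v. B!i \<subseteq> {..<v!i} \<and> card (B!i) = k!i)"

definition admissible2 :: "nat list \<Rightarrow> nat list \<Rightarrow> nat set list \<Rightarrow> bool" where
  "admissible2 v k T \<longleftrightarrow> length T = length v \<and>
     (\<forall>i<length v. T!i \<subseteq> {..<v!i} \<and> card (T!i) \<le> k!i) \<and>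
     (\<Sum>i<length v. card (T!i)) = 2"

definition contained_in :: "nat set list \<Rightarrow> nat set list \<Rightarrow> bool" where
  "contained_in T B \<longleftrightarrow> (\<forall>i<length T. T!i \<subseteq> B!i)"

text \<open>A GC(v,k,2): a finite family (list, repetitions allowed) of blocks
covering every admissible tuple.\<close>
definition is_GC2 :: "nat list \<Rightarrow> nat list \<Rightarrow> nat set list list \<Rightarrow> bool" where
  "is_GC2 v k F \<longleftrightarrow> (\<forall>B\<in>set F. is_block v k B) \<and>
     (\<forall>T. admissible2 v k T \<longrightarrow> (\<exists>B\<in>set F. contained_in T B))"

definition C2 :: "nat list \<Rightarrow> nat list \<Rightarrow> nat" where
  "C2 v k = (LEAST m. \<exists>F. is_GC2 v k F \<and> length F = m)"

end

theory Submission
  imports Defs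
begin

lemma nths_alt: "nths xs A = map (nth xs) (filter (\<lambda>i. i\<in>A) [0..<length xs])"
proof (induction xs arbitrary: A)
  case Nil then show ?case by simp
next
  case (Cons x xs)
  have "[0..<length (x#xs)] = 0 # map Suc [0..<length xs]"
    using map_Suc_upt[of 0 "length xs"] upt_conv_Cons[of 0 "Suc (length xs)"] by simp
  then show ?case using Cons[of "{j. Suc j \<in> A}"]
    by (simp add: nths_Cons filter_map comp_def)
qed

definition cov :: "nat list \<Rightarrow> nat list \<Rightarrow> nat set list list \<Rightarrow> bool" where
 "cov V K F \<longleftrightarrow> (\<forall>i j x y. i<length V \<longrightarrow> j<length V \<longrightarrow> x<V!i \<longrightarrow> y<V!j \<longrightarrow>
    (i=j \<longrightarrow> x\<noteq>y \<and> 2 \<le> K!i) \<longrightarrow> (i\<noteq>j \<longrightarrow> 1 \<le> K!i \<and> 1 \<le> K!j) \<longrightarrow>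
    (\<exists>B\<in>set F. x\<in>B!i \<and> y\<in>B!j))"

lemma adm_cov:
  assumes "\<forall>T. admissible2 V K T \<longrightarrow> (\<exists>B\<in>set F. contained_in T B)"
  shows "cov V K F"
  unfolding cov_def
proof (intro allI impI)
  fix i j x y
  assume i: "i<length V" and j: "j<length V" and x: "x<V!i" and y: "y<V!j"
    and c1: "i=j \<longrightarrow> x\<noteq>y \<and> 2 \<le> K!i" and c2: "i\<noteq>j \<longrightarrow> 1 \<le> K!i \<and> 1 \<le> K!j"
  let ?n = "length V"
  show "\<exists>B\<in>set F. x\<in>B!i \<and> y\<in>B!j"
  proof (cases "i=j")
    case True
    define T where "T = (replicate ?n {})[i := {x,y}]"
    have Tn: "\<And>t. t < ?n \<Longrightarrow> T!t = (if t = i then {x,y} else {})"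
      unfolding T_def using i by (simp add: nth_list_update)
    have "(\<Sum>t<?n. card (T!t)) = (\<Sum>t<?n. if t = i then 2 else 0)"
      using Tn c1 True by (intro sum.cong) auto
    also have "\<dots> = 2" using i by simp
    finally have "admissible2 V K T" unfolding admissible2_def
      using Tn c1 True x y by (auto simp: T_def)
    then obtain B where B: "B\<in>set F" "contained_in T B" using assms by blast
    have "length T = ?n" by (simp add: T_def)
    then have "T!i \<subseteq> B!i" using B(2) i unfolding contained_in_def by auto
    then show ?thesis using Tn[of i] i True B(1) by auto
  next
    case False
    define T where "T = (replicate ?n {})[i := {x}, j := {y}]"
    have Tn: "\<And>t. t < ?n \<Longrightarrow> T!t = (if t = j then {y} else if t = i then {x} else {})"
      unfolding T_def using i j by (simp add: nth_list_update)
    have "(\<Sum>t<?n. card (T!t)) = (\<Sum>t<?n. (if t = i then 1 else 0) + (if t = j then 1 else 0))"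
      using Tn False by (intro sum.cong) auto
    also have "\<dots> = 2" using i j by (simp add: sum.distrib)
    finally have "admissible2 V K T" unfolding admissible2_def
      using Tn c2 False x y by (auto simp: T_def)
    then obtain B where B: "B\<in>set F" "contained_in T B" using assms by blast
    have "length T = ?n" by (simp add: T_def)
    then have "T!i \<subseteq> B!i" "T!j \<subseteq> B!j" using B(2) i j unfolding contained_in_def by auto
    then show ?thesis using Tn[of i] Tn[of j] i j False B(1) by auto
  qed
qed

lemma cov_adm:
  assumes "cov V K F" "admissible2 V K T"
  shows "\<exists>B\<in>set F. contained_in T B"
proof -
  let ?n = "length V"
  define f where "f t = card (T!t)" for t
  have lenT: "length T = ?n" using assms(2) by (simp add: admissible2_def)
  have sub: "\<And>t. t<?n \<Longrightarrow> T!t \<subseteq> {..<V!t} \<and> card (T!t) \<le> K!t"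
    using assms(2) by (simp add: admissible2_def)
  have fin: "\<And>t. t<?n \<Longrightarrow> finite (T!t)" using sub finite_subset by blast
  have S: "(\<Sum>t<?n. f t) = 2" using assms(2) by (simp add: admissible2_def f_def)
  have emp: "\<And>t. t<?n \<Longrightarrow> f t = 0 \<Longrightarrow> T!t = {}" using fin f_def by auto
  obtain i where i: "i<?n" "f i > 0"
  proof -
    have "\<not> (\<forall>t\<in>{..<?n}. f t = 0)" using S sum.neutral by (metis zero_neq_numeral)
    then show ?thesis using that by auto
  qed
  have S2: "f i + (\<Sum>t\<in>{..<?n}-{i}. f t) = 2"
    using S i by (simp add: sum.remove)
  show ?thesis
  proof (cases "f i = 2")
    case True
    then have z: "\<And>t. t<?n \<Longrightarrow> t \<noteq> i \<Longrightarrow> T!t = {}" using S2 emp by auto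
    obtain x y where xy: "x\<noteq>y" "T!i = {x,y}" using True f_def card_2_iff by metis
    have "x < V!i" "y < V!i" "2 \<le> K!i" using sub[OF i(1)] xy True f_def by auto
    then obtain B where B: "B\<in>set F" "x\<in>B!i" "y\<in>B!i"
      using assms(1) i(1) xy unfolding cov_def by blast
    have "contained_in T B" unfolding contained_in_def
      using z B xy lenT by (metis empty_subsetI insert_subset)
    then show ?thesis using B by blast
  next
    case False
    then have fi: "f i = 1" using S2 i by linarith
    then have S3: "(\<Sum>t\<in>{..<?n}-{i}. f t) = 1" using S2 by simp
    obtain j where j: "j \<in> {..<?n}-{i}" "f j > 0"
    proof -
      have "\<not> (\<forall>t\<in>{..<?n}-{i}. f t = 0)" using S3 sum.neutral by (metis zero_neq_one)
      then show ?thesis using that by auto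
    qed
    have S4: "f j + (\<Sum>t\<in>{..<?n}-{i}-{j}. f t) = 1"
      using S3 j by (simp add: sum.remove)
    then have fj: "f j = 1" using j by linarith
    then have z: "\<And>t. t<?n \<Longrightarrow> t \<noteq> i \<Longrightarrow> t \<noteq> j \<Longrightarrow> T!t = {}" using S4 emp by auto
    obtain x where x: "T!i = {x}" using fi f_def card_1_singletonE by metis
    obtain y where y: "T!j = {y}" using fj f_def card_1_singletonE by metis
    have jn: "j < ?n" "j \<noteq> i" using j by auto
    have "x < V!i" "y < V!j" "1 \<le> K!i" "1 \<le> K!j"
      using sub[OF i(1)] sub[OF jn(1)] x y fi fj f_def by auto
    then obtain B where B: "B\<in>set F" "x\<in>B!i" "y\<in>B!j"
      using assms(1) i(1) jn unfolding cov_def by blast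
    have "contained_in T B" unfolding contained_in_def
      using z B x y lenT by (metis empty_subsetI insert_subset)
    then show ?thesis using B by blast
  qed
qed

lemma gc_iff: "is_GC2 V K F \<longleftrightarrow> (\<forall>B\<in>set F. is_block V K B) \<and> cov V K F"
  unfolding is_GC2_def using adm_cov cov_adm by blast

lemma C2_eqI:
  assumes "\<And>F. is_GC2 V K F \<Longrightarrow> \<exists>F'. is_GC2 V' K' F' \<and> length F' = length F"
      and "\<And>F'. is_GC2 V' K' F' \<Longrightarrow> \<exists>F. is_GC2 V K F \<and> length F = length F'"
  shows "C2 V K = C2 V' K'"
proof -
  have "(\<lambda>m. \<exists>F. is_GC2 V K F \<and> length F = m) = (\<lambda>m. \<exists>F. is_GC2 V' K' F \<and> length F = m)"
    using assms by (intro ext) metis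
  then show ?thesis unfolding C2_def by simp
qed

lemma covD:
  assumes "cov V K F" "i<length V" "j<length V" "x<V!i" "y<V!j"
    "i=j \<Longrightarrow> x\<noteq>y \<and> 2 \<le> K!i" "i\<noteq>j \<Longrightarrow> 1 \<le> K!i \<and> 1 \<le> K!j"
  shows "\<exists>B\<in>set F. x\<in>B!i \<and> y\<in>B!j"
  using assms unfolding cov_def by blast

lemma transfer_down:
  assumes h: "\<forall>c<length V'. h c < length V \<and> V!(h c) = V'!c \<and> K!(h c) = K'!c"
    and hinj: "inj_on h {..<length V'}"
    and G: "is_GC2 V K F"
  shows "\<exists>F'. is_GC2 V' K' F' \<and> length F' = length F"
proof -
  define \<Psi> where "\<Psi> B = map (\<lambda>c. B!(h c)) [0..<length V']" for B :: "nat set list"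
  have blk: "\<forall>B\<in>set F. is_block V K B" and cv: "cov V K F" using G gc_iff by auto
  have "is_block V' K' (\<Psi> B)" if "B\<in>set F" for B
  proof -
    have b: "length B = length V" "\<And>i. i<length V \<Longrightarrow> B!i \<subseteq> {..<V!i} \<and> card (B!i) = K!i"
      using blk that unfolding is_block_def by auto
    show ?thesis unfolding is_block_def \<Psi>_def
    proof (intro conjI allI impI)
      fix i assume i: "i < length V'"
      then have e: "h i < length V" "V!(h i) = V'!i" "K!(h i) = K'!i" using h by auto
      have m: "map (\<lambda>c. B ! h c) [0..<length V'] ! i = B ! h i" using i by simp
      show "map (\<lambda>c. B ! h c) [0..<length V'] ! i \<subseteq> {..<V' ! i}"
        "card (map (\<lambda>c. B ! h c) [0..<length V'] ! i) = K' ! i"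
        unfolding m using b(2)[OF e(1)] e(2,3) by simp_all
    qed simp
  qed
  moreover have "cov V' K' (map \<Psi> F)"
    unfolding cov_def
  proof (intro allI impI)
    fix i j x y
    assume i: "i<length V'" and j: "j<length V'" and x: "x<V'!i" and y: "y<V'!j"
      and c1: "i=j \<longrightarrow> x\<noteq>y \<and> 2 \<le> K'!i" and c2: "i\<noteq>j \<longrightarrow> 1 \<le> K'!i \<and> 1 \<le> K'!j"
    have hij: "h i = h j \<longleftrightarrow> i = j" using hinj i j by (auto dest: inj_onD)
    have ei: "h i < length V" "V!(h i) = V'!i" "K!(h i) = K'!i" using h i by auto
    have ej: "h j < length V" "V!(h j) = V'!j" "K!(h j) = K'!j" using h j by auto
    obtain B where B: "B\<in>set F" "x\<in>B!(h i)" "y\<in>B!(h j)"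
      using covD[OF cv ei(1) ej(1)] x y c1 c2 hij ei ej by auto
    have "\<Psi> B \<in> set (map \<Psi> F)" using B by auto
    moreover have "x \<in> \<Psi> B ! i" "y \<in> \<Psi> B ! j" using B i j by (auto simp: \<Psi>_def)
    ultimately show "\<exists>B\<in>set (map \<Psi> F). x \<in> B ! i \<and> y \<in> B ! j" by blast
  qed
  ultimately have "is_GC2 V' K' (map \<Psi> F)" using gc_iff by auto
  then show ?thesis by (intro exI[of _ "map \<Psi> F"]) simp
qed

lemma transfer_up:
  assumes g: "\<forall>c<length V. g c < length V' \<and> V'!(g c) = V!c \<and> K'!(g c) = K!c"
    and gcoll: "\<forall>c<length V. \<forall>d<length V. c\<noteq>d \<longrightarrow> g c = g d \<longrightarrow> 2 \<le> K!c \<and> K!c \<le> V!c"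
    and K1: "\<forall>c<length V. 1 \<le> K!c"
    and G: "is_GC2 V' K' F'"
  shows "\<exists>F. is_GC2 V K F \<and> length F = length F'"
proof -
  define \<Phi> where "\<Phi> B = map (\<lambda>c. B!(g c)) [0..<length V]" for B :: "nat set list"
  have blk: "\<forall>B\<in>set F'. is_block V' K' B" and cv: "cov V' K' F'" using G gc_iff by auto
  have "is_block V K (\<Phi> B)" if "B\<in>set F'" for B
  proof -
    have b: "length B = length V'" "\<And>i. i<length V' \<Longrightarrow> B!i \<subseteq> {..<V'!i} \<and> card (B!i) = K'!i"
      using blk that unfolding is_block_def by auto
    show ?thesis unfolding is_block_def \<Phi>_def
    proof (intro conjI allI impI)
      fix i assume i: "i < length V"
      then have e: "g i < length V'" "V'!(g i) = V!i" "K'!(g i) = K!i" using g by auto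
      have m: "map (\<lambda>c. B ! g c) [0..<length V] ! i = B ! g i" using i by simp
      show "map (\<lambda>c. B ! g c) [0..<length V] ! i \<subseteq> {..<V ! i}"
        "card (map (\<lambda>c. B ! g c) [0..<length V] ! i) = K ! i"
        unfolding m using b(2)[OF e(1)] e(2,3) by simp_all
    qed simp
  qed
  moreover have "cov V K (map \<Phi> F')"
    unfolding cov_def
  proof (intro allI impI)
    fix i j x y
    assume i: "i<length V" and j: "j<length V" and x: "x<V!i" and y: "y<V!j"
      and c1: "i=j \<longrightarrow> x\<noteq>y \<and> 2 \<le> K!i" and c2: "i\<noteq>j \<longrightarrow> 1 \<le> K!i \<and> 1 \<le> K!j"
    have ei: "g i < length V'" "V'!(g i) = V!i" "K'!(g i) = K!i" using g i by auto
    have ej: "g j < length V'" "V'!(g j) = V!j" "K'!(g j) = K!j" using g j by auto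
    obtain B where B: "B\<in>set F'" "x\<in>B!(g i)" "y\<in>B!(g j)"
    proof (cases "g i = g j")
      case gij: True
      show ?thesis
      proof (cases "i = j")
        case True
        show ?thesis using covD[OF cv ei(1) ei(1), of x y] that x y c1 ei True by auto
      next
        case False
        have k2: "2 \<le> K!i" "K!i \<le> V!i" using gcoll i j False gij by auto
        show ?thesis
        proof (cases "x = y")
          case False
          have "y < V'!(g i)" using y ej gij by simp
          then show ?thesis using covD[OF cv ei(1) ei(1), of x y] that x False k2 ei gij by auto
        next
          case True
          define y' where "y' = (if x = 0 then 1 else (0::nat))"
          have y': "y' < V'!(g i)" "x \<noteq> y'" using k2 ei by (auto simp: y'_def)
          then obtain B where "B\<in>set F'" "x\<in>B!(g i)" using covD[OF cv ei(1) ei(1), of x y'] x k2 ei by auto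
          then show ?thesis using that True gij by simp
        qed
      qed
    next
      case False
      then have "i \<noteq> j" by auto
      then show ?thesis using covD[OF cv ei(1) ej(1), of x y] that x y c2 ei ej False by auto
    qed
    have "\<Phi> B \<in> set (map \<Phi> F')" using B by auto
    moreover have "x \<in> \<Phi> B ! i" "y \<in> \<Phi> B ! j" using B i j by (auto simp: \<Phi>_def)
    ultimately show "\<exists>B\<in>set (map \<Phi> F'). x \<in> B ! i \<and> y \<in> B ! j" by blast
  qed
  ultimately have "is_GC2 V K (map \<Phi> F')" using gc_iff by auto
  then show ?thesis by (intro exI[of _ "map \<Phi> F'"]) simp
qed

theorem theorem3p13:
  fixes u w l :: "nat list" and R :: "nat set"
  assumes "\<forall>x\<in>set u. 0 < x"
    and "length l = length w"
    and "\<forall>i<length w. 2 \<le> l!i \<and> l!i \<le> w!i"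
    and "R \<subseteq> {..<length w}"
    and "\<forall>i<length w. \<exists>!j. j \<in> R \<and> w!j = w!i \<and> l!j = l!i"
  shows "C2 (u @ w) (replicate (length u) 1 @ l)
       = C2 (u @ nths w R) (replicate (length u) 1 @ nths l R)"
proof -
  let ?p = "length u" and ?n = "length w"
  define js where "js = filter (\<lambda>i. i\<in>R) [0..<?n]"
  have nw: "nths w R = map (nth w) js" unfolding js_def by (rule nths_alt)
  have nl: "nths l R = map (nth l) js" unfolding js_def using nths_alt[of l R] assms(2) by simp
  have setjs: "set js = R" using assms(4) unfolding js_def by auto
  have djs: "distinct js" unfolding js_def by simp
  have jsn: "\<And>t. t < length js \<Longrightarrow> js!t < ?n" using setjs assms(4) nth_mem by blast
  define \<rho> where "\<rho> i = (SOME t. t < length js \<and> w!(js!t) = w!i \<and> l!(js!t) = l!i)" for i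
  have rho: "\<rho> i < length js \<and> w!(js!(\<rho> i)) = w!i \<and> l!(js!(\<rho> i)) = l!i" if i: "i < ?n" for i
  proof -
    obtain j where j: "j\<in>R" "w!j = w!i" "l!j = l!i" using assms(5) i by blast
    then obtain t where "t < length js" "js!t = j" using setjs by (metis in_set_conv_nth)
    then have "\<exists>t. t < length js \<and> w!(js!t) = w!i \<and> l!(js!t) = l!i" using j by blast
    then show ?thesis unfolding \<rho>_def by (rule someI_ex)
  qed
  define V where "V = u @ w"
  define K where "K = replicate ?p (1::nat) @ l"
  define V' where "V' = u @ map (nth w) js"
  define K' where "K' = replicate ?p (1::nat) @ map (nth l) js"
  define h where "h c = (if c < ?p then c else ?p + js!(c - ?p))" for c
  define g where "g c = (if c < ?p then c else ?p + \<rho> (c - ?p))" for c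
  have lV: "length V = ?p + ?n" "length V' = ?p + length js" unfolding V_def V'_def by auto
  have h: "\<forall>c<length V'. h c < length V \<and> V!(h c) = V'!c \<and> K!(h c) = K'!c"
  proof (intro allI impI)
    fix c assume c: "c < length V'"
    show "h c < length V \<and> V!(h c) = V'!c \<and> K!(h c) = K'!c"
    proof (cases "c < ?p")
      case True then show ?thesis unfolding h_def V_def V'_def K_def K'_def by (simp add: nth_append)
    next
      case False
      then have t: "c - ?p < length js" using c lV by simp
      show ?thesis using False t jsn[OF t] assms(2)
        unfolding h_def V_def V'_def K_def K'_def by (simp add: nth_append)
    qed
  qed
  have hinj: "inj_on h {..<length V'}"
  proof (rule inj_onI)
    fix a b assume a: "a \<in> {..<length V'}" and b: "b \<in> {..<length V'}" and e: "h a = h b"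
    show "a = b"
    proof (cases "a < ?p"; cases "b < ?p")
      assume "\<not> a < ?p" "\<not> b < ?p"
      then have "js!(a - ?p) = js!(b - ?p)" "a - ?p < length js" "b - ?p < length js"
        using e a b lV unfolding h_def by auto
      then have "a - ?p = b - ?p" using djs nth_eq_iff_index_eq by blast
      then show ?thesis using \<open>\<not> a < ?p\<close> \<open>\<not> b < ?p\<close> by simp
    qed (use e in \<open>auto simp: h_def\<close>)
  qed
  have g: "\<forall>c<length V. g c < length V' \<and> V'!(g c) = V!c \<and> K'!(g c) = K!c"
  proof (intro allI impI)
    fix c assume c: "c < length V"
    show "g c < length V' \<and> V'!(g c) = V!c \<and> K'!(g c) = K!c"
    proof (cases "c < ?p")
      case True then show ?thesis unfolding g_def V_def V'_def K_def K'_def by (simp add: nth_append)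
    next
      case False
      then have t: "c - ?p < ?n" using c lV by simp
      show ?thesis using False rho[OF t] assms(2)
        unfolding g_def V_def V'_def K_def K'_def by (simp add: nth_append)
    qed
  qed
  have gcoll: "\<forall>c<length V. \<forall>d<length V. c\<noteq>d \<longrightarrow> g c = g d \<longrightarrow> 2 \<le> K!c \<and> K!c \<le> V!c"
  proof (intro allI impI)
    fix c d assume c: "c < length V" and d: "d < length V" and cd: "c \<noteq> d" and e: "g c = g d"
    have "\<not> c < ?p"
    proof
      assume cp: "c < ?p"
      show False
      proof (cases "d < ?p")
        case True then show False using cp cd e by (simp add: g_def)
      next
        case False then show False using cp e by (simp add: g_def)
      qed
    qed
    then have t: "c - ?p < ?n" using c lV by simp
    then show "2 \<le> K!c \<and> K!c \<le> V!c" using \<open>\<not> c < ?p\<close> assms(3)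
      unfolding V_def K_def by (simp add: nth_append)
  qed
  have K1: "\<forall>c<length V. 1 \<le> K!c"
  proof (intro allI impI)
    fix c assume c: "c < length V"
    show "1 \<le> K!c"
    proof (cases "c < ?p")
      case True then show ?thesis unfolding K_def by (simp add: nth_append)
    next
      case False
      then have t: "c - ?p < ?n" using c lV by simp
      then show ?thesis using False assms(3) unfolding K_def by (force simp: nth_append)
    qed
  qed
  have "C2 V K = C2 V' K'"
    by (rule C2_eqI) (use transfer_down[OF h hinj] transfer_up[OF g gcoll K1] in auto)
  then show ?thesis unfolding V_def K_def V'_def K'_def nw nl .
qed

end
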